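(* Let $(P_n)_{n\ge 0}$ be the sequence of polynomials in one variable $m$ defined by $P_0(m)=m$ and, for $n\ge 0$, \[P_{n+1}(m)=P_n(m+1)+\sum_{i=0}^{n}P_i(m)\,P_{n-i}(m).\] Then for every $n\ge 0$ the degree of $P_n$ is equal to $n+1$.
   Context: The polynomials $P_n$ have integer coefficients; $P_n(0)$ equals the number of closed lambda terms of size $n$ (de Bruijn indices having size $0$, abstractions and applications size $1$), though this interpretation is not needed for the claim. *)

theory Defs
  imports "HOL-Computational_Algebra.Polynomial"
begin

text \<open>P n as an integer polynomial in m; P (n+1)(m) = P n (m+1) + sum_{i=0}^n P i (m) P (n-i) (m).
  The shift m |-> m+1 is composition with [:1,1:].\<close>
fun P :: "nat \<Rightarrow> int poly" where
  "P 0 = [:0, 1:]"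
| "P (Suc n) = pcompose (P n) [:1, 1:] + (\<Sum>i\<in>{0..n}. P i * P (n - i))"

end

theory Submission
  imports Defs
begin

lemma aux: "degree (P n) = n + 1 \<and> lead_coeff (P n) > 0"
proof (induction n rule: less_induct)
  case (less n)
  show ?case
  proof (cases n)
    case 0 then show ?thesis by simp
  next
    case (Suc k)
    define S where "S = (\<Sum>i\<in>{0..k}. P i * P (k - i))"
    have IH: "\<And>i. i \<le> k \<Longrightarrow> degree (P i) = i + 1 \<and> lead_coeff (P i) > 0"
    proof -
      fix i assume "i \<le> k"
      then have "i < n" using Suc by simp
      then show "degree (P i) = i + 1 \<and> lead_coeff (P i) > 0" using less.IH by blast
    qed
    have cS: "coeff S (k+2) = (\<Sum>i\<in>{0..k}. lead_coeff (P i) * lead_coeff (P (k - i)))"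
      unfolding S_def coeff_sum
    proof (rule sum.cong[OF refl])
      fix i assume "i \<in> {0..k}"
      then have "degree (P i) = i+1" "degree (P (k-i)) = k - i + 1" using IH by auto
      moreover have "k + 2 = degree (P i) + degree (P (k-i))" using calculation \<open>i \<in> {0..k}\<close> by auto
      ultimately show "coeff (P i * P (k - i)) (k + 2) = lead_coeff (P i) * lead_coeff (P (k - i))"
        by (metis coeff_mult_degree_sum)
    qed
    have pos: "coeff S (k+2) > 0" unfolding cS
    proof (rule sum_pos)
      fix i assume "i \<in> {0..k}"
      then have "i \<le> k" "k - i \<le> k" by auto
      then have "lead_coeff (P i) > 0" "lead_coeff (P (k-i)) > 0" using IH by blast+
      then show "lead_coeff (P i) * lead_coeff (P (k - i)) > 0" by (rule mult_pos_pos)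
    qed auto
    have dS: "degree S \<le> k + 2" unfolding S_def
    proof (rule degree_sum_le)
      fix i assume "i \<in> {0..k}"
      then have "degree (P i) = i+1" "degree (P (k-i)) = k - i + 1" using IH by auto
      then show "degree (P i * P (k - i)) \<le> k + 2"
        using degree_mult_le[of "P i" "P (k-i)"] \<open>i \<in> {0..k}\<close> by auto
    qed simp
    have dC: "degree (pcompose (P k) [:1,1:]) = k + 1"
      using IH[of k] by (simp add: degree_pcompose)
    have PS: "P n = pcompose (P k) [:1,1:] + S" using Suc S_def by simp
    have c: "coeff (P n) (k+2) = coeff S (k+2)"
      unfolding PS coeff_add using dC by (simp add: coeff_eq_0)
    have le: "degree (P n) \<le> k + 2" unfolding PS
      by (rule degree_add_le) (use dC dS in auto)
    have ge: "k + 2 \<le> degree (P n)" using c pos by (intro le_degree) auto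
    have "degree (P n) = k + 2" using le ge by simp
    then show ?thesis using c pos Suc by simp
  qed
qed

theorem lemma1:
  fixes n :: nat
  shows "degree (P n) = n + 1"
  using aux by blast

end
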